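(* Let $\{G_n\}_{n\ge1}$ be a centered Gaussian sequence with $E[G_n^2]=1$ for all $n$ (jointly Gaussian). If $$\sum_{n\geq 2}\frac{1}{n\log^3 n}\sum_{k,l=1}^n\frac{|E(G_kG_l)|}{kl}<\infty,$$ then almost surely, for every continuous and bounded $\varphi:\mathbb R\to\mathbb R$, $$\frac{1}{\log n}\sum_{k=1}^n\frac1k\,\varphi(G_k)\longrightarrow E[\varphi(N)]\quad\text{as }n\to\infty,$$ where $N\sim\mathscr N(0,1)$. *)

theory Defs
  imports "HOL-Probability.Probability"
begin

definition gaussian_rv :: "'a measure \<Rightarrow> ('a \<Rightarrow> real) \<Rightarrow> bool" where
  "gaussian_rv M X \<longleftrightarrow> X \<in> borel_measurable M \<and>
     ((\<exists>c. AE x in M. X x = c) \<or>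
      (\<exists>\<mu> \<sigma>. \<sigma> > 0 \<and> distributed M lborel X (\<lambda>x. ennreal (normal_density \<mu> \<sigma> x))))"

definition jointly_gaussian :: "'a measure \<Rightarrow> (nat \<Rightarrow> 'a \<Rightarrow> real) \<Rightarrow> bool" where
  "jointly_gaussian M G \<longleftrightarrow>
     (\<forall>I c. finite I \<longrightarrow> I \<subseteq> {1..} \<longrightarrow> gaussian_rv M (\<lambda>x. \<Sum>i\<in>I. c i * G i x))"

end

theory Submission
  imports Defs
begin

lemma inv_le_ln_diff:
  assumes "k \<ge> (2::nat)"
  shows "1 / real k \<le> ln (real k) - ln (real k - 1)"
proof -
  have "ln ((real k - 1) / real k) \<le> (real k - 1) / real k - 1"
    using assms by (intro ln_le_minus_one) auto
  moreover have "ln ((real k - 1) / real k) = ln (real k - 1) - ln (real k)"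
    using assms by (subst ln_div) auto
  moreover have "(real k - 1) / real k - 1 = - (1 / real k)"
    using assms by (simp add: field_simps)
  ultimately show ?thesis by linarith
qed

lemma sum_inv_upper:
  assumes "1 \<le> N" "N \<le> n"
  shows "(\<Sum>k\<in>{N<..n}. 1 / real k) \<le> ln (real n) - ln (real N)"
  using assms(2)
proof (induction n rule: dec_induct)
  case base then show ?case by simp
next
  case (step n)
  have "{N<..Suc n} = insert (Suc n) {N<..n}" using step by auto
  then have "(\<Sum>k\<in>{N<..Suc n}. 1 / real k) = 1 / real (Suc n) + (\<Sum>k\<in>{N<..n}. 1 / real k)"
    by simp
  also have "1 / real (Suc n) \<le> ln (real (Suc n)) - ln (real (Suc n) - 1)"
    using step assms by (intro inv_le_ln_diff) auto
  finally show ?case using step by simp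
qed

lemma sum_inv_lower:
  assumes "1 \<le> A" "A \<le> B"
  shows "ln (real B + 1) - ln (real A) \<le> (\<Sum>k\<in>{A..B}. 1 / real k)"
  using assms(2)
proof (induction B rule: dec_induct)
  case base then show ?case using ln_diff_le_inverse[of "real A"] assms by simp
next
  case (step n)
  have "{A..Suc n} = insert (Suc n) {A..n}" using step by auto
  then have "(\<Sum>k\<in>{A..Suc n}. 1 / real k) = 1 / real (Suc n) + (\<Sum>k\<in>{A..n}. 1 / real k)"
    by simp
  moreover have "ln (real (Suc n) + 1) - ln (real (Suc n)) \<le> 1 / real (Suc n)"
    using ln_diff_le_inverse[of "real (Suc n)"] by simp
  moreover have "real (Suc n) = real n + 1" by simp
  ultimately show ?case using step.IH by (simp only:)
qed

lemma window:
  fixes T :: "nat \<Rightarrow> real"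
  assumes "2 \<le> A" "q \<ge> 0" "\<Lambda> > 0"
    and "\<And>n. n \<in> {A..B} \<Longrightarrow> q \<le> (T n)^2"
    and "\<And>n. n \<in> {A..B} \<Longrightarrow> ln (real n) \<le> \<Lambda>"
  shows "q / \<Lambda>^3 * (\<Sum>n\<in>{A..B}. 1 / real n) \<le>
         (\<Sum>n\<in>{A..B}. if n \<ge> 2 then (T n)^2 / (real n * ln (real n) ^ 3) else 0)"
  unfolding sum_distrib_left
proof (rule sum_mono)
  fix n assume n: "n \<in> {A..B}"
  then have n2: "n \<ge> 2" using assms by auto
  then have lpos: "ln (real n) > 0" by simp
  have l3: "ln (real n) ^ 3 \<le> \<Lambda> ^ 3" using lpos assms(5)[OF n] by (intro power_mono) auto
  have "q / \<Lambda>^3 * (1 / real n) = q / (real n * \<Lambda>^3)" by simp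
  also have "\<dots> \<le> (T n)^2 / (real n * \<Lambda>^3)"
    using assms(4)[OF n] n2 assms(3) by (intro divide_right_mono) auto
  also have "\<dots> \<le> (T n)^2 / (real n * ln (real n)^3)"
    using n2 lpos l3 assms(3) by (intro divide_left_mono mult_left_mono mult_pos_pos) auto
  finally show "q / \<Lambda>^3 * (1 / real n) \<le> (if n \<ge> 2 then (T n)^2 / (real n * ln (real n) ^ 3) else 0)"
    using n2 by simp
qed

lemma det_main:
  fixes T :: "nat \<Rightarrow> real" and m :: real
  assumes m: "m \<ge> 0"
    and mono: "\<And>N n. 1 \<le> N \<Longrightarrow> N \<le> n \<Longrightarrow> T N - m * (ln (real n) - ln (real N)) \<le> T n"
    and summ: "summable (\<lambda>n. if n \<ge> 2 then (T n)^2 / (real n * ln (real n) ^ 3) else 0)"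
  shows "(\<lambda>n. T n / ln (real n)) \<longlonglongrightarrow> 0"
proof (rule LIMSEQ_I)
  fix r :: real assume r: "0 < r"
  define a where "a = (\<lambda>n. if n \<ge> 2 then (T n)^2 / (real n * ln (real n) ^ 3) else 0)"
  have a_nonneg: "a n \<ge> 0" for n unfolding a_def by auto
  define \<epsilon> where "\<epsilon> = min r 1"
  define \<delta> where "\<delta> = \<epsilon> / (2 * (m + 1))"
  have ep: "\<epsilon> > 0" "\<epsilon> \<le> 1" "\<epsilon> \<le> r" using r unfolding \<epsilon>_def by auto
  have dp: "\<delta> > 0" "\<delta> \<le> 1/2" "m * \<delta> \<le> \<epsilon>/2"
    using ep m unfolding \<delta>_def by (auto simp: field_simps)
  define c where "c = min (\<epsilon>^2 * \<delta> / (4 * (1+\<delta>)^3)) (\<epsilon>^2*\<delta>/8)"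
  have cpos: "c > 0" using ep dp unfolding c_def by auto
  obtain N0 where N0: "\<And>p q. p \<ge> N0 \<Longrightarrow> norm (sum a {p..<q}) < c"
    using summ[folded a_def, unfolded summable_Cauchy] cpos by blast
  define L0 where "L0 = max (ln (real N0 + 2) / (1 - \<delta>)) (2 * ln 2 / \<delta>) + 1"
  define N1 where "N1 = max (nat \<lceil>exp L0\<rceil>) N0 + 3"
  show "\<exists>no. \<forall>n\<ge>no. norm (T n / ln (real n) - 0) < r"
  proof (intro exI allI impI)
    fix N assume N: "N1 \<le> N"
    define L where "L = ln (real N)"
    have N3: "N \<ge> 3" "N \<ge> N0" using N unfolding N1_def by auto
    have "exp L0 \<le> real (nat \<lceil>exp L0\<rceil>)" by linarith
    also have "\<dots> \<le> real N" using N unfolding N1_def by auto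
    finally have "exp L0 \<le> real N" .
    then have "ln (exp L0) \<le> ln (real N)" using N3 by (subst ln_le_cancel_iff) auto
    then have LL0: "L \<ge> L0" unfolding L_def by simp
    have Lpos: "L > 0" unfolding L_def using N3 by simp
    have expL: "exp L = real N" unfolding L_def using N3 by simp
    have "L0 \<ge> ln (real N0 + 2) / (1 - \<delta>)" unfolding L0_def by linarith
    then have "(1 - \<delta>) * L0 \<ge> (1 - \<delta>) * (ln (real N0 + 2) / (1 - \<delta>))"
      using dp by (intro mult_left_mono) auto
    then have L0a: "(1 - \<delta>) * L0 \<ge> ln (real N0 + 2)" using dp by simp
    have "L0 \<ge> 2 * ln 2 / \<delta>" unfolding L0_def by linarith
    then have "\<delta> * L0 \<ge> \<delta> * (2 * ln 2 / \<delta>)"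
      using dp by (intro mult_left_mono) auto
    then have L0b: "\<delta> * L0 \<ge> 2 * ln 2" using dp by simp
    have "\<bar>T N\<bar> < \<epsilon> * L"
    proof (rule ccontr)
      assume "\<not> \<bar>T N\<bar> < \<epsilon> * L"
      then consider "T N \<ge> \<epsilon> * L" | "T N \<le> - (\<epsilon> * L)" by linarith
      then show False
      proof cases
        case 1
        define B where "B = nat \<lfloor>exp ((1+\<delta>)*L)\<rfloor>"
        have "real B = of_int \<lfloor>exp ((1+\<delta>)*L)\<rfloor>" unfolding B_def by simp
        then have B1: "real B \<le> exp ((1+\<delta>)*L)" "exp ((1+\<delta>)*L) < real B + 1"
          using of_int_floor_le[of "exp ((1+\<delta>)*L)"] real_of_int_floor_add_one_gt[of "exp ((1+\<delta>)*L)"]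
          by linarith+
        have "real N \<le> exp ((1+\<delta>)*L)" unfolding expL[symmetric] using dp Lpos by simp
        then have NB: "N \<le> B" unfolding B_def by (simp add: le_nat_floor)
        have "ln (real B) \<le> ln (exp ((1+\<delta>)*L))"
          using B1 NB N3 by (subst ln_le_cancel_iff) auto
        then have lnB: "ln (real B) \<le> (1+\<delta>)*L" by simp
        have "ln (exp ((1+\<delta>)*L)) < ln (real B + 1)"
          using B1 by (subst ln_less_cancel_iff) auto
        then have lnB1: "ln (real B + 1) \<ge> (1+\<delta>)*L" by simp
        define q where "q = (\<epsilon> * L / 2)^2"
        have win: "q / ((1+\<delta>)*L)^3 * (\<Sum>n\<in>{N..B}. 1 / real n) \<le> (\<Sum>n\<in>{N..B}. a n)"
          unfolding a_def
        proof (rule window)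
          show "2 \<le> N" using N3 by simp
          show "q \<ge> 0" unfolding q_def by simp
          show "(1+\<delta>)*L > 0" using dp Lpos by simp
        next
          fix n assume n: "n \<in> {N..B}"
          then have "ln (real n) \<le> ln (real B)" using N3 by auto
          then show "ln (real n) \<le> (1+\<delta>)*L" using lnB by linarith
        next
          fix n assume n: "n \<in> {N..B}"
          have "ln (real n) \<le> ln (real B)" using n N3 by (subst ln_le_cancel_iff) auto
          then have l1: "ln (real n) \<le> (1+\<delta>)*L" using lnB by linarith
          have "T N - m * (ln (real n) - L) \<le> T n" using mono[of N n] n N3 unfolding L_def by auto
          moreover have "m * (ln (real n) - L) \<le> m * (\<delta> * L)"
            using l1 m by (intro mult_left_mono) (auto simp: algebra_simps)
          moreover have "m * (\<delta> * L) \<le> \<epsilon> / 2 * L"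
            using mult_right_mono[OF dp(3), of L] Lpos by (simp add: mult.assoc)
          ultimately have "\<epsilon> * L / 2 \<le> T n" using 1 by linarith
          then show "q \<le> (T n)^2" unfolding q_def using ep Lpos by (intro power_mono) auto
        qed
        have S: "\<delta> * L \<le> (\<Sum>n\<in>{N..B}. 1 / real n)"
          using sum_inv_lower[of N B] NB N3 lnB1 distrib_right[of 1 \<delta> L] unfolding L_def by simp
        define D where "D = (1+\<delta>)^3"
        have Dpos: "D > 0" unfolding D_def using dp by simp
        have eqD: "((1+\<delta>)*L)^3 = D * L^3" unfolding D_def by (simp add: power_mult_distrib)
        have "q / (D * L^3) * (\<delta> * L) = \<epsilon>^2 * \<delta> / (4 * D)"
          unfolding q_def using Lpos Dpos by (simp add: field_simps power2_eq_square power3_eq_cube)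
        then have "q / ((1+\<delta>)*L)^3 * (\<delta> * L) = \<epsilon>^2 * \<delta> / (4 * (1+\<delta>)^3)"
          unfolding eqD D_def .
        moreover have "q / ((1+\<delta>)*L)^3 * (\<delta> * L) \<le> q / ((1+\<delta>)*L)^3 * (\<Sum>n\<in>{N..B}. 1 / real n)"
          using S unfolding q_def using dp Lpos by (intro mult_left_mono) auto
        ultimately have "c \<le> (\<Sum>n\<in>{N..B}. a n)" using win unfolding c_def by linarith
        moreover have "norm (sum a {N..<Suc B}) < c" using N0 N3 by blast
        moreover have "{N..<Suc B} = {N..B}" by auto
        moreover have "0 \<le> sum a {N..B}" using a_nonneg by (simp add: sum_nonneg)
        ultimately show False by simp
      next
        case 2
        define A where "A = nat \<lceil>exp ((1-\<delta>)*L)\<rceil>"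
        have "real A = of_int \<lceil>exp ((1-\<delta>)*L)\<rceil>" unfolding A_def by simp
        then have A1: "exp ((1-\<delta>)*L) \<le> real A" "real A < exp ((1-\<delta>)*L) + 1"
          using le_of_int_ceiling[of "exp ((1-\<delta>)*L)"] of_int_ceiling_le_add_one[of "exp ((1-\<delta>)*L)"]
            ceiling_correct[of "exp ((1-\<delta>)*L)"]
          by linarith+
        have "exp ((1-\<delta>)*L) \<ge> exp ((1-\<delta>)*L0)" using dp LL0 by (simp add: mult_left_mono)
        moreover have "exp ((1-\<delta>)*L0) \<ge> exp (ln (real N0 + 2))" using L0a by (simp only: exp_le_cancel_iff)
        moreover have "exp (ln (real N0 + 2)) = real N0 + 2" by simp
        ultimately have AN0: "real A \<ge> real N0 + 2" using A1 by linarith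
        then have A2: "A \<ge> 2" "A \<ge> N0" by linarith+
        have "exp ((1-\<delta>)*L) \<le> real N" unfolding expL[symmetric] using dp Lpos by simp
        then have AN: "A \<le> N" unfolding A_def by (simp add: nat_ceiling_le_eq)
        have e1: "exp ((1-\<delta>)*L) \<ge> 1" using dp Lpos by simp
        have "ln (exp ((1-\<delta>)*L)) \<le> ln (real A)"
          using A1 A2 by (subst ln_le_cancel_iff) auto
        then have lnA: "ln (real A) \<ge> (1-\<delta>)*L" by simp
        have "real A \<le> 2 * exp ((1-\<delta>)*L)" using A1 e1 by linarith
        then have "ln (real A) \<le> ln (2 * exp ((1-\<delta>)*L))" using A2 by simp
        then have lnA2: "ln (real A) \<le> ln 2 + (1-\<delta>)*L" by (simp add: ln_mult)
        define q where "q = (\<epsilon> * L / 2)^2"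
        have win: "q / L^3 * (\<Sum>n\<in>{A..N}. 1 / real n) \<le> (\<Sum>n\<in>{A..N}. a n)"
          unfolding a_def
        proof (rule window)
          show "2 \<le> A" using A2 by simp
          show "q \<ge> 0" unfolding q_def by simp
          show "L > 0" using Lpos by simp
        next
          fix n assume n: "n \<in> {A..N}"
          then show "ln (real n) \<le> L" unfolding L_def using A2 by auto
        next
          fix n assume n: "n \<in> {A..N}"
          have "ln (real A) \<le> ln (real n)" using n A2 by (subst ln_le_cancel_iff) auto
          then have l1: "ln (real n) \<ge> (1-\<delta>)*L" using lnA by linarith
          have "T n - m * (L - ln (real n)) \<le> T N" using mono[of n N] n A2 unfolding L_def by auto
          moreover have "m * (L - ln (real n)) \<le> m * (\<delta> * L)"
            using l1 m by (intro mult_left_mono) (auto simp: algebra_simps)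
          moreover have "m * (\<delta> * L) \<le> \<epsilon> / 2 * L"
            using mult_right_mono[OF dp(3), of L] Lpos by (simp add: mult.assoc)
          ultimately have "T n \<le> - (\<epsilon> * L / 2)" using 2 by linarith
          then have "\<epsilon> * L / 2 \<le> - T n" by linarith
          then have "(\<epsilon> * L / 2)^2 \<le> (- T n)^2" using ep Lpos by (intro power_mono) auto
          then show "q \<le> (T n)^2" unfolding q_def by simp
        qed
        have "ln (real N + 1) \<ge> L" unfolding L_def using N3 by simp
        then have S: "\<delta> * L / 2 \<le> (\<Sum>n\<in>{A..N}. 1 / real n)"
        proof -
          have "\<delta> * L0 \<le> \<delta> * L" using LL0 dp by (intro mult_left_mono) auto
          moreover have "(1 - \<delta>) * L = L - \<delta> * L" by (simp add: algebra_simps)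
          moreover have "ln (real N + 1) - ln (real A) \<le> (\<Sum>k = A..N. 1 / real k)"
            using sum_inv_lower[of A N] AN A2 by simp
          ultimately show ?thesis using lnA2 L0b \<open>ln (real N + 1) \<ge> L\<close> by linarith
        qed
        have "q / L^3 * (\<delta> * L / 2) = \<epsilon>^2 * \<delta> / 8"
          unfolding q_def using Lpos dp by (simp add: field_simps power2_eq_square power3_eq_cube)
        moreover have "q / L^3 * (\<delta> * L / 2) \<le> q / L^3 * (\<Sum>n\<in>{A..N}. 1 / real n)"
          using S unfolding q_def using dp Lpos by (intro mult_left_mono) auto
        ultimately have "c \<le> (\<Sum>n\<in>{A..N}. a n)" using win unfolding c_def by linarith
        moreover have "norm (sum a {A..<Suc N}) < c" using N0 A2 by blast
        moreover have "{A..<Suc N} = {A..N}" by auto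
        moreover have "0 \<le> sum a {A..N}" using a_nonneg by (simp add: sum_nonneg)
        ultimately show False by simp
      qed
    qed
    moreover have "\<epsilon> * L \<le> r * L" using Lpos ep by (intro mult_right_mono) auto
    ultimately have "\<bar>T N\<bar> < r * L" by linarith
    then show "norm (T N / ln (real N) - 0) < r"
      using Lpos unfolding L_def by (simp add: divide_less_eq abs_divide)
  qed
qed

lemma AE_summable_of_summable_integral:
  fixes f :: "nat \<Rightarrow> 'a \<Rightarrow> real"
  assumes meas: "\<And>n. f n \<in> borel_measurable M"
    and nn: "\<And>n x. 0 \<le> f n x"
    and int: "\<And>n. integrable M (f n)"
    and summ: "summable (\<lambda>n. integral\<^sup>L M (f n))"
  shows "AE x in M. summable (\<lambda>n. f n x)"
proof -
  have "(\<integral>\<^sup>+x. (\<Sum>n. ennreal (f n x)) \<partial>M) = (\<Sum>n. \<integral>\<^sup>+x. ennreal (f n x) \<partial>M)"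
    by (rule nn_integral_suminf) (use meas in auto)
  also have "\<dots> = (\<Sum>n. ennreal (integral\<^sup>L M (f n)))"
    using int nn by (subst nn_integral_eq_integral) auto
  also have "\<dots> = ennreal (\<Sum>n. integral\<^sup>L M (f n))"
    using summ nn by (intro suminf_ennreal2) (auto intro: integral_nonneg_AE)
  finally have "(\<integral>\<^sup>+x. (\<Sum>n. ennreal (f n x)) \<partial>M) \<noteq> \<infinity>" by simp
  then have "AE x in M. (\<Sum>n. ennreal (f n x)) \<noteq> \<infinity>"
    by (intro nn_integral_noteq_infinite) (use meas in auto)
  then show ?thesis
    by (rule AE_mp) (auto intro!: AE_I2 summable_suminf_not_top nn simp: top_unique)
qed

lemma harm_over_ln: "(\<lambda>n. harm n / ln (real n) :: real) \<longlonglongrightarrow> 1"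
proof -
  have lnt: "filterlim (\<lambda>n. ln (real n)) at_top sequentially"
    by (rule filterlim_compose[OF ln_at_top filterlim_real_sequentially])
  have "(\<lambda>n. (harm n - ln (real n)) / ln (real n) :: real) \<longlonglongrightarrow> 0"
    by (rule tendsto_divide_0[OF euler_mascheroni_LIMSEQ filterlim_at_top_imp_at_infinity[OF lnt]])
  then have "(\<lambda>n. 1 + (harm n - ln (real n)) / ln (real n) :: real) \<longlonglongrightarrow> 1 + 0"
    by (intro tendsto_add) auto
  moreover have "eventually (\<lambda>n. 1 + (harm n - ln (real n)) / ln (real n) = harm n / ln (real n)) sequentially"
    using eventually_ge_at_top[of 2]
    by eventually_elim (auto simp: field_simps)
  ultimately show ?thesis using Lim_transform_eventually by fastforce
qed

lemma core:
  fixes M :: "'a measure" and Y :: "nat \<Rightarrow> 'a \<Rightarrow> real" and \<rho> :: "nat \<Rightarrow> nat \<Rightarrow> real"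
  assumes P: "prob_space M"
    and Ymeas: "\<And>k. 1 \<le> k \<Longrightarrow> Y k \<in> borel_measurable M"
    and Ynn: "\<And>k x. 0 \<le> Y k x"
    and Yint1: "\<And>k. 1 \<le> k \<Longrightarrow> integrable M (Y k)"
    and Yint: "\<And>k l. 1 \<le> k \<Longrightarrow> 1 \<le> l \<Longrightarrow> integrable M (\<lambda>x. Y k x * Y l x)"
    and mean: "\<And>k. 1 \<le> k \<Longrightarrow> integral\<^sup>L M (Y k) = m"
    and cov: "\<And>k l. 1 \<le> k \<Longrightarrow> 1 \<le> l \<Longrightarrow>
                 \<bar>integral\<^sup>L M (\<lambda>x. Y k x * Y l x) - m^2\<bar> \<le> C * \<bar>\<rho> k l\<bar>"
    and summ: "summable (\<lambda>n::nat. if n \<ge> 2 then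
            1 / (real n * (ln (real n)) ^ 3) *
            (\<Sum>k=1..n. \<Sum>l=1..n. \<bar>\<rho> k l\<bar> / (real k * real l)) else 0)"
  shows "AE x in M. (\<lambda>n. (1 / ln (real n)) * (\<Sum>k=1..n. Y k x / real k)) \<longlonglongrightarrow> m"
proof -
  interpret prob_space M by (rule P)
  have m0: "m \<ge> 0" using mean[of 1] Ynn by (metis integral_nonneg_AE AE_I2 order_refl)
  define T where "T n x = (\<Sum>k=1..n. (Y k x - m) / real k)" for n x
  define D where "D n = (\<Sum>k=1..n. \<Sum>l=1..n. \<bar>\<rho> k l\<bar> / (real k * real l))" for n
  have Tsq: "(T n x)^2 = (\<Sum>k=1..n. \<Sum>l=1..n. (Y k x - m) * (Y l x - m) / (real k * real l))" for n x
    unfolding T_def power2_eq_square sum_product by (simp add: field_simps)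
  have int_kl: "integrable M (\<lambda>x. (Y k x - m) * (Y l x - m) / (real k * real l))"
    if "1 \<le> k" "1 \<le> l" for k l
  proof -
    have "(\<lambda>x. (Y k x - m) * (Y l x - m) / (real k * real l)) =
          (\<lambda>x. (Y k x * Y l x - m * Y k x - m * Y l x + m * m) / (real k * real l))"
      by (simp add: algebra_simps)
    then show ?thesis using Yint1 Yint that by (auto intro!: integrable_divide)
  qed
  have E_kl: "integral\<^sup>L M (\<lambda>x. (Y k x - m) * (Y l x - m) / (real k * real l)) =
        (integral\<^sup>L M (\<lambda>x. Y k x * Y l x) - m^2) / (real k * real l)"
    if "1 \<le> k" "1 \<le> l" for k l
  proof -
    have "(\<lambda>x. (Y k x - m) * (Y l x - m)) =
          (\<lambda>x. Y k x * Y l x - m * Y k x - m * Y l x + m * m)"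
      by (simp add: algebra_simps)
    then have "integral\<^sup>L M (\<lambda>x. (Y k x - m) * (Y l x - m)) =
        integral\<^sup>L M (\<lambda>x. Y k x * Y l x) - m * m - m * m + m * m"
      using Yint1 Yint that mean by (simp add: prob_space)
    then show ?thesis by (simp add: power2_eq_square)
  qed
  have intT: "integrable M (\<lambda>x. (T n x)^2)" for n
    unfolding Tsq by (rule Bochner_Integration.integrable_sum, rule Bochner_Integration.integrable_sum, rule int_kl) auto
  have ET: "integral\<^sup>L M (\<lambda>x. (T n x)^2) \<le> C * D n" for n
  proof -
    have "integral\<^sup>L M (\<lambda>x. (T n x)^2) =
          (\<Sum>k=1..n. integral\<^sup>L M (\<lambda>x. \<Sum>l=1..n. (Y k x - m) * (Y l x - m) / (real k * real l)))"
      unfolding Tsq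
      by (rule Bochner_Integration.integral_sum)
         (rule Bochner_Integration.integrable_sum, rule int_kl; auto)
    also have "\<dots> = (\<Sum>k=1..n. \<Sum>l=1..n. integral\<^sup>L M (\<lambda>x. (Y k x - m) * (Y l x - m) / (real k * real l)))"
      by (intro sum.cong refl Bochner_Integration.integral_sum int_kl) auto
    also have "\<dots> = (\<Sum>k=1..n. \<Sum>l=1..n. (integral\<^sup>L M (\<lambda>x. Y k x * Y l x) - m^2) / (real k * real l))"
      by (intro sum.cong refl E_kl) auto
    also have "\<dots> \<le> (\<Sum>k=1..n. \<Sum>l=1..n. C * (\<bar>\<rho> k l\<bar> / (real k * real l)))"
    proof (intro sum_mono)
      fix k l assume "k \<in> {1..n}" "l \<in> {1..n}"
      then have kl: "1 \<le> k" "1 \<le> l" by auto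
      have "(integral\<^sup>L M (\<lambda>x. Y k x * Y l x) - m^2) \<le> C * \<bar>\<rho> k l\<bar>"
        using cov[OF kl] by linarith
      then show "(integral\<^sup>L M (\<lambda>x. Y k x * Y l x) - m^2) / (real k * real l) \<le> C * (\<bar>\<rho> k l\<bar> / (real k * real l))"
        using kl by (simp add: divide_right_mono)
    qed
    also have "\<dots> = C * D n" unfolding D_def by (simp add: sum_distrib_left)
    finally show ?thesis .
  qed
  define W where "W n x = (if n \<ge> 2 then (T n x)^2 / (real n * ln (real n) ^ 3) else 0)" for n x
  have Tmeas: "T n \<in> borel_measurable M" for n
  proof -
    have "(\<lambda>x. (Y k x - m) / real k) \<in> borel_measurable M" if "k \<in> {1..n}" for k
      using Ymeas[of k] that by auto
    then show ?thesis unfolding T_def by (rule borel_measurable_sum)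
  qed
  have Wmeas: "W n \<in> borel_measurable M" for n unfolding W_def using Tmeas by measurable
  have Wnn: "0 \<le> W n x" for n x unfolding W_def by auto
  have Wint: "integrable M (W n)" for n
    unfolding W_def using intT by (cases "n \<ge> 2") auto
  have EW: "integral\<^sup>L M (W n) = (if n \<ge> 2 then integral\<^sup>L M (\<lambda>x. (T n x)^2) / (real n * ln (real n) ^ 3) else 0)" for n
    unfolding W_def by (cases "n \<ge> 2") auto
  have "summable (\<lambda>n. integral\<^sup>L M (W n))"
  proof (rule summable_comparison_test)
    show "summable (\<lambda>n::nat. C * (if n \<ge> 2 then 1 / (real n * (ln (real n)) ^ 3) * D n else 0))"
      using summ unfolding D_def by (intro summable_mult)
    show "\<exists>N. \<forall>n\<ge>N. norm (integral\<^sup>L M (W n)) \<le> C * (if n \<ge> 2 then 1 / (real n * (ln (real n)) ^ 3) * D n else 0)"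
    proof (intro exI allI impI)
      fix n :: nat assume "2 \<le> n"
      then have pos: "real n * ln (real n) ^ 3 > 0" by auto
      have "0 \<le> integral\<^sup>L M (W n)" using Wnn by (simp add: integral_nonneg_AE)
      then have "norm (integral\<^sup>L M (W n)) = integral\<^sup>L M (W n)" by simp
      also have "\<dots> = integral\<^sup>L M (\<lambda>x. (T n x)^2) / (real n * ln (real n) ^ 3)"
        using \<open>2 \<le> n\<close> EW by simp
      also have "\<dots> \<le> C * D n / (real n * ln (real n) ^ 3)"
        using ET pos by (intro divide_right_mono) auto
      finally show "norm (integral\<^sup>L M (W n)) \<le> C * (if n \<ge> 2 then 1 / (real n * (ln (real n)) ^ 3) * D n else 0)"
        using \<open>2 \<le> n\<close> by simp
    qed
  qed
  then have "AE x in M. summable (\<lambda>n. W n x)"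
    by (intro AE_summable_of_summable_integral Wmeas Wnn Wint)
  then show ?thesis
  proof (rule AE_mp, intro AE_I2 impI)
    fix x assume sx: "summable (\<lambda>n. W n x)"
    have mono: "T N x - m * (ln (real n) - ln (real N)) \<le> T n x" if "1 \<le> N" "N \<le> n" for N n
    proof -
      have split: "{1..n} = {1..N} \<union> {N<..n}" using that by auto
      have "T n x = T N x + (\<Sum>k\<in>{N<..n}. (Y k x - m) / real k)"
        unfolding T_def split by (subst sum.union_disjoint) auto
      moreover have "(\<Sum>k\<in>{N<..n}. - m * (1 / real k)) \<le> (\<Sum>k\<in>{N<..n}. (Y k x - m) / real k)"
      proof (intro sum_mono)
        fix k assume "k \<in> {N<..n}"
        have "(-m) / real k \<le> (Y k x - m) / real k"
          by (rule divide_right_mono) (use Ynn[of k x] in auto)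
        then show "- m * (1 / real k) \<le> (Y k x - m) / real k" by simp
      qed
      moreover have "(\<Sum>k\<in>{N<..n}. - m * (1 / real k)) = - m * (\<Sum>k\<in>{N<..n}. 1 / real k)"
        by (simp add: sum_distrib_left)
      moreover have "m * (\<Sum>k\<in>{N<..n}. 1 / real k) \<le> m * (ln (real n) - ln (real N))"
        using sum_inv_upper[OF that] m0 by (intro mult_left_mono)
      ultimately show ?thesis by linarith
    qed
    have "(\<lambda>n. T n x / ln (real n)) \<longlonglongrightarrow> 0"
      by (rule det_main[OF m0 mono]) (use sx in \<open>auto simp: W_def\<close>)
    then have "(\<lambda>n. T n x / ln (real n) + m * (harm n / ln (real n))) \<longlonglongrightarrow> 0 + m * 1"
      by (intro tendsto_intros harm_over_ln)
    moreover have "T n x / ln (real n) + m * (harm n / ln (real n)) =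
                   (1 / ln (real n)) * (\<Sum>k=1..n. Y k x / real k)" for n
    proof -
      have "T n x = (\<Sum>k=1..n. Y k x / real k) - m * harm n"
        unfolding T_def harm_def
        by (simp add: sum_distrib_left divide_inverse left_diff_distrib sum_subtractf)
      moreover have "T n x / ln (real n) + m * (harm n / ln (real n)) = (T n x + m * harm n) / ln (real n)"
        by (simp add: add_divide_distrib)
      ultimately show ?thesis by simp
    qed
    ultimately show "(\<lambda>n. (1 / ln (real n)) * (\<Sum>k=1..n. Y k x / real k)) \<longlonglongrightarrow> m" by simp
  qed
qed

lemma std_normal_cos_sin:
  "integral\<^sup>L std_normal_distribution (\<lambda>x. cos (s * x)) = exp (- (s^2) / 2)"
  "integral\<^sup>L std_normal_distribution (\<lambda>x. sin (s * x)) = 0"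
proof -
  interpret real_distribution std_normal_distribution by (rule real_dist_normal_dist)
  have int: "integrable std_normal_distribution (\<lambda>x. iexp (s * x))"
    by (rule integrable_iexp) auto
  have re: "Re (iexp (s * x)) = cos (s * x)" and im: "Im (iexp (s * x)) = sin (s * x)" for x
  proof -
    have "iexp (s * x) = cis (s * x)" by (simp add: cis_conv_exp)
    then show "Re (iexp (s * x)) = cos (s * x)" "Im (iexp (s * x)) = sin (s * x)" by simp_all
  qed
  have "char std_normal_distribution s = complex_of_real (exp (- (s^2) / 2))"
    by (simp add: char_std_normal_distribution)
  then have "Re (char std_normal_distribution s) = exp (- (s^2) / 2)"
    and "Im (char std_normal_distribution s) = 0" by simp_all
  then show "integral\<^sup>L std_normal_distribution (\<lambda>x. cos (s * x)) = exp (- (s^2) / 2)"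
    and "integral\<^sup>L std_normal_distribution (\<lambda>x. sin (s * x)) = 0"
  proof -
    have "integral\<^sup>L std_normal_distribution (\<lambda>x. cos (s * x)) =
          integral\<^sup>L std_normal_distribution (\<lambda>x. Re (iexp (s * x)))" by (simp only: re)
    also have "\<dots> = Re (char std_normal_distribution s)"
      unfolding char_def by (rule integral_Re[OF int])
    finally show "integral\<^sup>L std_normal_distribution (\<lambda>x. cos (s * x)) = exp (- (s^2) / 2)"
      using \<open>Re (char std_normal_distribution s) = exp (- (s^2) / 2)\<close> by simp
    have "integral\<^sup>L std_normal_distribution (\<lambda>x. sin (s * x)) =
          integral\<^sup>L std_normal_distribution (\<lambda>x. Im (iexp (s * x)))" by (simp only: im)
    also have "\<dots> = Im (char std_normal_distribution s)"
      unfolding char_def by (rule integral_Im[OF int])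
    finally show "integral\<^sup>L std_normal_distribution (\<lambda>x. sin (s * x)) = 0"
      using \<open>Im (char std_normal_distribution s) = 0\<close> by simp
  qed
qed

lemma (in prob_space) gauss0:
  assumes g: "gaussian_rv M Z" and m0: "expectation Z = 0"
  shows gauss0_int: "integrable M (\<lambda>x. Z x ^ k)"
    and gauss0_cos: "expectation (\<lambda>x. cos (t * Z x)) = exp (- (t^2 * expectation (\<lambda>x. (Z x)^2)) / 2)"
    and gauss0_sin: "expectation (\<lambda>x. sin (t * Z x)) = 0"
    and gauss0_4: "expectation (\<lambda>x. Z x ^ 4) = 3 * (expectation (\<lambda>x. (Z x)^2))^2"
proof -
  have Zm[measurable]: "Z \<in> borel_measurable M" using g unfolding gaussian_rv_def by auto
  have "(\<exists>c. AE x in M. Z x = c) \<or>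
      (\<exists>\<mu> \<sigma>. \<sigma> > 0 \<and> distributed M lborel Z (\<lambda>x. ennreal (normal_density \<mu> \<sigma> x)))"
    using g unfolding gaussian_rv_def by auto
  then have "integrable M (\<lambda>x. Z x ^ k) \<and>
    expectation (\<lambda>x. cos (t * Z x)) = exp (- (t^2 * expectation (\<lambda>x. (Z x)^2)) / 2) \<and>
    expectation (\<lambda>x. sin (t * Z x)) = 0 \<and>
    expectation (\<lambda>x. Z x ^ 4) = 3 * (expectation (\<lambda>x. (Z x)^2))^2"
  proof
    assume "\<exists>c. AE x in M. Z x = c"
    then obtain c where c: "AE x in M. Z x = c" by blast
    have "expectation Z = expectation (\<lambda>x. c)"
      by (rule integral_cong_AE) (use c in auto)
    then have "c = 0" using m0 by (simp add: prob_space)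
    then have Z0: "AE x in M. Z x = 0" using c by simp
    have E: "expectation (\<lambda>x. f (Z x)) = f 0" if [measurable]: "f \<in> borel_measurable borel" for f :: "real \<Rightarrow> real"
    proof -
      have "expectation (\<lambda>x. f (Z x)) = expectation (\<lambda>x. f 0)"
        by (rule integral_cong_AE) (use Z0 in auto)
      then show ?thesis by (simp add: prob_space)
    qed
    have "integrable M (\<lambda>x. Z x ^ k) \<longleftrightarrow> integrable M (\<lambda>x. (0::real) ^ k)"
      by (rule integrable_cong_AE) (use Z0 in auto)
    moreover have "integrable M (\<lambda>x. (0::real) ^ k)" by simp
    ultimately show ?thesis
      using E[of "\<lambda>x. cos (t * x)"] E[of "\<lambda>x. sin (t * x)"] E[of "\<lambda>x. x ^ 4"] E[of "\<lambda>x. x ^ 2"]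
      by simp
  next
    assume "\<exists>\<mu> \<sigma>. \<sigma> > 0 \<and> distributed M lborel Z (\<lambda>x. ennreal (normal_density \<mu> \<sigma> x))"
    then obtain \<mu> \<sigma> where sp: "\<sigma> > 0" and D: "distributed M lborel Z (\<lambda>x. ennreal (normal_density \<mu> \<sigma> x))"
      by blast
    have E: "expectation (\<lambda>x. f (Z x)) = (\<integral>x. normal_density \<mu> \<sigma> x * f x \<partial>lborel)"
      if [measurable]: "f \<in> borel_measurable borel" for f :: "real \<Rightarrow> real"
      using distributed_integral[OF D, of f] by (simp add: normal_density_nonneg)
    have "\<mu> = expectation Z" using E[of "\<lambda>x. x"] integral_normal_moment_nz_1[OF sp, of \<mu>] by simp
    then have mu0: "\<mu> = 0" using m0 by simp
    have "integrable lborel (\<lambda>x. normal_density \<mu> \<sigma> x * x ^ k)"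
      using integrable_normal_moment[OF sp, of \<mu> k] mu0 by simp
    then have I: "integrable M (\<lambda>x. Z x ^ k)"
      using distributed_integrable[OF D, of "\<lambda>x. x ^ k"] by (simp add: normal_density_nonneg)
    have E2: "expectation (\<lambda>x. (Z x)^2) = \<sigma>^2"
      using E[of "\<lambda>x. x ^ 2"] integral_normal_moment_even[OF sp, of \<mu> 1] mu0 sp
      by (simp add: power2_eq_square ac_simps)
    have E4: "expectation (\<lambda>x. (Z x)^4) = 3 * \<sigma>^4"
      using E[of "\<lambda>x. x ^ 4"] integral_normal_moment_even[OF sp, of \<mu> 2] mu0 sp
      by (simp add: field_simps power2_eq_square fact_numeral power4_eq_xxxx)
    have D': "distributed M lborel (\<lambda>x. (Z x - \<mu>) / \<sigma>) (\<lambda>x. ennreal (std_normal_density x))"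
      using D normal_standard_normal_convert[OF sp, of Z \<mu>] by simp
    have ES: "expectation (\<lambda>x. f (Z x)) = integral\<^sup>L std_normal_distribution (\<lambda>y. f (\<sigma> * y))"
      if [measurable]: "f \<in> borel_measurable borel" for f :: "real \<Rightarrow> real"
    proof -
      have "expectation (\<lambda>x. f (\<sigma> * ((Z x - \<mu>) / \<sigma>))) = (\<integral>y. std_normal_density y * f (\<sigma> * y) \<partial>lborel)"
        using distributed_integral[OF D', of "\<lambda>y. f (\<sigma> * y)"] by (simp add: normal_density_nonneg)
      also have "\<dots> = integral\<^sup>L std_normal_distribution (\<lambda>y. f (\<sigma> * y))"
        by (subst integral_density) (auto simp: normal_density_nonneg)
      finally show ?thesis using mu0 sp by simp
    qed
    have "expectation (\<lambda>x. cos (t * Z x)) = exp (- ((t * \<sigma>)^2) / 2)"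
      using ES[of "\<lambda>x. cos (t * x)"] std_normal_cos_sin(1)[of "t * \<sigma>"] by (simp add: mult.assoc)
    moreover have "expectation (\<lambda>x. sin (t * Z x)) = 0"
      using ES[of "\<lambda>x. sin (t * x)"] std_normal_cos_sin(2)[of "t * \<sigma>"] by (simp add: mult.assoc)
    ultimately show ?thesis using I E2 E4 by (simp add: power_mult_distrib power2_eq_square power4_eq_xxxx mult_ac)
  qed
  then show "integrable M (\<lambda>x. Z x ^ k)"
    and "expectation (\<lambda>x. cos (t * Z x)) = exp (- (t^2 * expectation (\<lambda>x. (Z x)^2)) / 2)"
    and "expectation (\<lambda>x. sin (t * Z x)) = 0"
    and "expectation (\<lambda>x. Z x ^ 4) = 3 * (expectation (\<lambda>x. (Z x)^2))^2" by auto
qed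

lemma abs_exp_sub1: "\<bar>exp x - 1\<bar> \<le> \<bar>x\<bar> * exp \<bar>x\<bar>" for x :: real
proof (cases "x \<ge> 0")
  case True
  have "1 + (-x) \<le> exp (-x)" by (rule exp_ge_add_one_self)
  then have "exp x * (1 - x) \<le> exp x * exp (-x)" by (intro mult_left_mono) auto
  then have "exp x - x * exp x \<le> 1" by (simp add: exp_minus algebra_simps)
  moreover have "exp x \<ge> 1" using True by simp
  ultimately show ?thesis using True by simp
next
  case False
  have "1 + x \<le> exp x" by (rule exp_ge_add_one_self)
  moreover have "\<bar>x\<bar> * 1 \<le> \<bar>x\<bar> * exp \<bar>x\<bar>" by (intro mult_left_mono) auto
  moreover have "exp x \<le> 1" using False by simp
  moreover have "\<bar>x\<bar> = - x" using False by simp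
  moreover have "\<bar>exp x - 1\<bar> = 1 - exp x" using \<open>exp x \<le> 1\<close> by simp
  ultimately show ?thesis by linarith
qed

lemma cosh_bound:
  fixes a r :: real
  assumes a: "a \<ge> 0" and r: "\<bar>r\<bar> \<le> 1"
  shows "\<bar>exp (-a) * ((exp (a*r) + exp (-(a*r))) / 2 - 1)\<bar> \<le> a * \<bar>r\<bar>"
    and "\<bar>exp (-a) * ((exp (a*r) - exp (-(a*r))) / 2)\<bar> \<le> a * \<bar>r\<bar>"
proof -
  have "a * \<bar>r\<bar> \<le> a * 1" using a r by (intro mult_left_mono) auto
  then have ar: "\<bar>a*r\<bar> \<le> a" using a by (simp add: abs_mult)
  have e1: "\<bar>exp (a*r) - 1\<bar> \<le> a * \<bar>r\<bar> * exp a"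
  proof -
    have "\<bar>exp (a*r) - 1\<bar> \<le> \<bar>a*r\<bar> * exp \<bar>a*r\<bar>" by (rule abs_exp_sub1)
    also have "\<dots> \<le> \<bar>a*r\<bar> * exp a" using ar by (intro mult_left_mono) auto
    finally show ?thesis using a by (simp add: abs_mult)
  qed
  have e2: "\<bar>exp (-(a*r)) - 1\<bar> \<le> a * \<bar>r\<bar> * exp a"
  proof -
    have "\<bar>exp (-(a*r)) - 1\<bar> \<le> \<bar>-(a*r)\<bar> * exp \<bar>-(a*r)\<bar>" by (rule abs_exp_sub1)
    also have "\<dots> \<le> \<bar>a*r\<bar> * exp a" using ar by (simp add: mult_left_mono)
    finally show ?thesis using a by (simp add: abs_mult)
  qed
  have ee: "exp (-a) * exp a = 1" by (simp add: exp_minus)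
  have "\<bar>(exp (a*r) + exp (-(a*r))) / 2 - 1\<bar> \<le> a * \<bar>r\<bar> * exp a"
  proof -
    define B where "B = a * \<bar>r\<bar> * exp a"
    define E1 where "E1 = exp (a*r)"
    define E2 where "E2 = exp (-(a*r))"
    have h1: "E1 - 1 \<le> B" "- (E1 - 1) \<le> B" "E2 - 1 \<le> B" "- (E2 - 1) \<le> B"
      using e1 e2 unfolding B_def[symmetric] E1_def[symmetric] E2_def[symmetric] abs_le_iff by auto
    have dd: "(E1 + E2) / 2 = E1 / 2 + E2 / 2" by simp
    have "(E1 + E2) / 2 - 1 \<le> B" using h1 unfolding dd by linarith
    moreover have "- ((E1 + E2) / 2 - 1) \<le> B" using h1 unfolding dd by linarith
    ultimately show ?thesis unfolding B_def[symmetric] E1_def[symmetric] E2_def[symmetric] abs_le_iff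
      by auto
  qed
  then have "exp (-a) * \<bar>(exp (a*r) + exp (-(a*r))) / 2 - 1\<bar> \<le> exp (-a) * (a * \<bar>r\<bar> * exp a)"
    by (intro mult_left_mono) auto
  also have "\<dots> = a * \<bar>r\<bar>" using ee by (simp add: algebra_simps)
  finally show "\<bar>exp (-a) * ((exp (a*r) + exp (-(a*r))) / 2 - 1)\<bar> \<le> a * \<bar>r\<bar>"
    by (simp add: abs_mult)
  have "\<bar>(exp (a*r) - exp (-(a*r))) / 2\<bar> \<le> a * \<bar>r\<bar> * exp a"
  proof -
    define B where "B = a * \<bar>r\<bar> * exp a"
    define E1 where "E1 = exp (a*r)"
    define E2 where "E2 = exp (-(a*r))"
    have h1: "E1 - 1 \<le> B" "- (E1 - 1) \<le> B" "E2 - 1 \<le> B" "- (E2 - 1) \<le> B"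
      using e1 e2 unfolding B_def[symmetric] E1_def[symmetric] E2_def[symmetric] abs_le_iff by auto
    have dd: "(E1 - E2) / 2 = E1 / 2 - E2 / 2" by (simp add: diff_divide_distrib)
    have "(E1 - E2) / 2 \<le> B" using h1 unfolding dd by linarith
    moreover have "- ((E1 - E2) / 2) \<le> B" using h1 unfolding dd by linarith
    ultimately show ?thesis unfolding B_def[symmetric] E1_def[symmetric] E2_def[symmetric] abs_le_iff
      by auto
  qed
  then have "exp (-a) * \<bar>(exp (a*r) - exp (-(a*r))) / 2\<bar> \<le> exp (-a) * (a * \<bar>r\<bar> * exp a)"
    by (intro mult_left_mono) auto
  also have "\<dots> = a * \<bar>r\<bar>" using ee by (simp add: algebra_simps)
  finally show "\<bar>exp (-a) * ((exp (a*r) - exp (-(a*r))) / 2)\<bar> \<le> a * \<bar>r\<bar>"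
    by (simp add: abs_mult)
qed

lemma jg_lin2:
  assumes "jointly_gaussian M G" "1 \<le> k" "1 \<le> l"
  shows "gaussian_rv M (\<lambda>x. a * G k x + b * G l x)"
proof (cases "k = l")
  case True
  have "gaussian_rv M (\<lambda>x. \<Sum>i\<in>{k}. (\<lambda>_. a + b) i * G i x)"
    using assms(1)[unfolded jointly_gaussian_def, rule_format, of "{k}" "\<lambda>_. a + b"] assms(2) by auto
  moreover have "(\<lambda>x. \<Sum>i\<in>{k}. (\<lambda>_. a + b) i * G i x) = (\<lambda>x. a * G k x + b * G l x)"
    using True by (simp add: algebra_simps)
  ultimately show ?thesis by simp
next
  case False
  have "gaussian_rv M (\<lambda>x. \<Sum>i\<in>{k,l}. (\<lambda>i. if i = k then a else b) i * G i x)"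
    using assms(1)[unfolded jointly_gaussian_def, rule_format, of "{k,l}" "\<lambda>i. if i = k then a else b"] assms(2,3) by auto
  moreover have "(\<lambda>x. \<Sum>i\<in>{k,l}. (\<lambda>i. if i = k then a else b) i * G i x) = (\<lambda>x. a * G k x + b * G l x)"
    using False by auto
  ultimately show ?thesis by simp
qed

lemma jg_single:
  assumes "jointly_gaussian M G" "1 \<le> k"
  shows "gaussian_rv M (G k)"
proof -
  have "gaussian_rv M (\<lambda>x. \<Sum>i\<in>{k}. (\<lambda>_. 1) i * G i x)"
    using assms(1)[unfolded jointly_gaussian_def, rule_format, of "{k}" "\<lambda>_. 1"] assms(2) by auto
  then show ?thesis by (simp add: eta_contract_eq)
qed

locale gseq =
  fixes M :: "'a measure" and G :: "nat \<Rightarrow> 'a \<Rightarrow> real"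
  assumes P: "prob_space M"
    and JG: "jointly_gaussian M G"
    and m0: "\<forall>n\<ge>1. integral\<^sup>L M (G n) = 0"
    and v1: "\<forall>n\<ge>1. integral\<^sup>L M (\<lambda>x. (G n x)\<^sup>2) = 1"
begin

interpretation prob_space M by (rule P)

lemma G_gauss: "1 \<le> k \<Longrightarrow> gaussian_rv M (G k)" using jg_single[OF JG] .

lemma G_meas[measurable]: "1 \<le> k \<Longrightarrow> G k \<in> borel_measurable M"
  using G_gauss unfolding gaussian_rv_def by auto

lemma G_int: "1 \<le> k \<Longrightarrow> integrable M (\<lambda>x. G k x ^ j)"
  using G_gauss m0 by (intro gauss0_int) auto

lemma G_int1: "1 \<le> k \<Longrightarrow> integrable M (G k)"
  using G_int[of k 1] by simp

definition "\<rho> k l = integral\<^sup>L M (\<lambda>x. G k x * G l x)"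

lemma XY_int:
  assumes "1 \<le> k" "1 \<le> l"
  shows "integrable M (\<lambda>x. G k x * G l x)"
proof -
  have g: "gaussian_rv M (\<lambda>x. 1 * G k x + 1 * G l x)" using jg_lin2[OF JG assms] .
  have "expectation (\<lambda>x. 1 * G k x + 1 * G l x) = 0"
    using G_int1 assms m0 by simp
  then have "integrable M (\<lambda>x. (1 * G k x + 1 * G l x) ^ 2)" using g by (intro gauss0_int)
  then have "integrable M (\<lambda>x. ((1 * G k x + 1 * G l x) ^ 2 - G k x ^ 2 - G l x ^ 2) / 2)"
    using G_int assms by auto
  moreover have "(\<lambda>x. ((1 * G k x + 1 * G l x) ^ 2 - G k x ^ 2 - G l x ^ 2) / 2) = (\<lambda>x. G k x * G l x)"
    by (simp add: power2_eq_square algebra_simps)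
  ultimately show ?thesis by simp
qed

lemma lin_facts:
  fixes a b t :: real
  assumes "1 \<le> k" "1 \<le> l"
  defines "Z \<equiv> (\<lambda>x. a * G k x + b * G l x)"
  defines "v \<equiv> a^2 + b^2 + 2 * a * b * \<rho> k l"
  shows "expectation Z = 0"
    and "expectation (\<lambda>x. (Z x)^2) = v"
    and "expectation (\<lambda>x. cos (t * Z x)) = exp (- (t^2 * v) / 2)"
    and "expectation (\<lambda>x. sin (t * Z x)) = 0"
    and "expectation (\<lambda>x. Z x ^ 4) = 3 * v^2"
    and "integrable M (\<lambda>x. Z x ^ j)"
proof -
  have g: "gaussian_rv M Z" unfolding Z_def using jg_lin2[OF JG assms(1) assms(2)] .
  show z0: "expectation Z = 0" unfolding Z_def using G_int1 assms m0 by simp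
  have sq: "(\<lambda>x. (Z x)^2) = (\<lambda>x. a^2 * (G k x)^2 + b^2 * (G l x)^2 + (2*a*b) * (G k x * G l x))"
    unfolding Z_def by (simp add: power2_eq_square algebra_simps)
  show ev: "expectation (\<lambda>x. (Z x)^2) = v"
    unfolding sq v_def \<rho>_def using G_int[of k 2] G_int[of l 2] XY_int[OF assms(1) assms(2)] v1 assms by simp
  show "expectation (\<lambda>x. cos (t * Z x)) = exp (- (t^2 * v) / 2)"
    using gauss0_cos[OF g z0, of t] ev by simp
  show "expectation (\<lambda>x. sin (t * Z x)) = 0" using gauss0_sin[OF g z0] .
  show "expectation (\<lambda>x. Z x ^ 4) = 3 * v^2" using gauss0_4[OF g z0] ev by simp
  show "integrable M (\<lambda>x. Z x ^ j)" using gauss0_int[OF g z0] .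
qed

lemma rho_bound:
  assumes "1 \<le> k" "1 \<le> l"
  shows "\<bar>\<rho> k l\<bar> \<le> 1"
proof -
  have "0 \<le> expectation (\<lambda>x. (1 * G k x + 1 * G l x)^2)" by (intro integral_nonneg_AE) auto
  also have "\<dots> = 2 + 2 * \<rho> k l" using lin_facts(2)[OF assms, of 1 1] by simp
  finally have 1: "0 \<le> 2 + 2 * \<rho> k l" .
  have "0 \<le> expectation (\<lambda>x. (1 * G k x + (-1) * G l x)^2)" by (intro integral_nonneg_AE) auto
  also have "\<dots> = 2 - 2 * \<rho> k l" using lin_facts(2)[OF assms, of 1 "-1"] by simp
  finally have 2: "0 \<le> 2 - 2 * \<rho> k l" .
  show ?thesis using 1 2 by linarith
qed

lemma bounded_int:
  fixes f :: "'a \<Rightarrow> real"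
  assumes "f \<in> borel_measurable M" "\<And>x. \<bar>f x\<bar> \<le> B"
  shows "integrable M f"
  using assms by (intro integrable_const_bound[of _ B]) auto

end

lemma cos_cos: "cos a * cos b = (cos (a - b) + cos (a + b)) / 2" for a b :: real
  by (simp add: cos_add cos_diff)

lemma sin_sin: "sin a * sin b = (cos (a - b) - cos (a + b)) / 2" for a b :: real
  by (simp add: cos_add cos_diff)

lemma exp_split:
  fixes t r :: real
  shows "exp (- (t^2 * (1\<^sup>2 + 1\<^sup>2 + 2 * 1 * (-1) * r)) / 2) = exp (-(t^2)) * exp (t^2 * r)"
    and "exp (- (t^2 * (1\<^sup>2 + 1\<^sup>2 + 2 * 1 * 1 * r)) / 2) = exp (-(t^2)) * exp (-(t^2 * r))"
    and "(exp (- (t^2) / 2))^2 = exp (-(t^2))"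
proof -
  have e1: "- (t^2 * (1\<^sup>2 + 1\<^sup>2 + 2 * 1 * (-1) * r)) / 2 = -(t^2) + t^2 * r" by (simp add: field_simps)
  show "exp (- (t^2 * (1\<^sup>2 + 1\<^sup>2 + 2 * 1 * (-1) * r)) / 2) = exp (-(t^2)) * exp (t^2 * r)"
    unfolding e1 by (rule exp_add)
  have e2: "- (t^2 * (1\<^sup>2 + 1\<^sup>2 + 2 * 1 * 1 * r)) / 2 = -(t^2) + -(t^2 * r)" by (simp add: field_simps)
  show "exp (- (t^2 * (1\<^sup>2 + 1\<^sup>2 + 2 * 1 * 1 * r)) / 2) = exp (-(t^2)) * exp (-(t^2 * r))"
    unfolding e2 by (rule exp_add)
  have "(exp (- (t^2) / 2))^2 = exp (- (t^2) / 2 + - (t^2) / 2)"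
    unfolding power2_eq_square by (rule exp_add[symmetric])
  also have "- (t^2) / 2 + - (t^2) / 2 = - (t^2)" by simp
  finally show "(exp (- (t^2) / 2))^2 = exp (-(t^2))" .
qed

context gseq
begin

interpretation prob_space M by (rule P)

lemma cos_mean: "1 \<le> k \<Longrightarrow> expectation (\<lambda>x. cos (t * G k x)) = exp (- (t^2) / 2)"
  using gauss0_cos[OF G_gauss, of k t] m0 v1 by simp

lemma sin_mean: "1 \<le> k \<Longrightarrow> expectation (\<lambda>x. sin (t * G k x)) = 0"
  using gauss0_sin[OF G_gauss, of k t] m0 by simp

lemma cos_int: "1 \<le> k \<Longrightarrow> integrable M (\<lambda>x. cos (t * G k x))"
  by (rule bounded_int[of _ 1]) auto

lemma sin_int: "1 \<le> k \<Longrightarrow> integrable M (\<lambda>x. sin (t * G k x))"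
  by (rule bounded_int[of _ 1]) auto

lemma cc_cov:
  assumes kl: "1 \<le> k" "1 \<le> l"
  shows "expectation (\<lambda>x. cos (t * G k x) * cos (t * G l x)) =
           exp (-(t^2)) * ((exp (t^2 * \<rho> k l) + exp (-(t^2 * \<rho> k l))) / 2)"
    and "expectation (\<lambda>x. sin (t * G k x) * sin (t * G l x)) =
           exp (-(t^2)) * ((exp (t^2 * \<rho> k l) - exp (-(t^2 * \<rho> k l))) / 2)"
proof -
  let ?A = "\<lambda>x. cos (t * (1 * G k x + (-1) * G l x))"
  let ?B = "\<lambda>x. cos (t * (1 * G k x + 1 * G l x))"
  have iA: "integrable M ?A" by (rule bounded_int[of _ 1]) (use kl in auto)
  have iB: "integrable M ?B" by (rule bounded_int[of _ 1]) (use kl in auto)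
  have eA: "expectation ?A = exp (-(t^2)) * exp (t^2 * \<rho> k l)"
    using lin_facts(3)[OF kl, where a=1 and b="-1" and t=t] exp_split(1)[of t "\<rho> k l"] by simp
  have eB: "expectation ?B = exp (-(t^2)) * exp (-(t^2 * \<rho> k l))"
    using lin_facts(3)[OF kl, where a=1 and b=1 and t=t] exp_split(2)[of t "\<rho> k l"] by simp
  have "(\<lambda>x. cos (t * G k x) * cos (t * G l x)) = (\<lambda>x. (?A x + ?B x) / 2)"
    by (simp add: cos_cos algebra_simps)
  then show "expectation (\<lambda>x. cos (t * G k x) * cos (t * G l x)) =
           exp (-(t^2)) * ((exp (t^2 * \<rho> k l) + exp (-(t^2 * \<rho> k l))) / 2)"
    using iA iB eA eB by (simp add: algebra_simps)
  have "(\<lambda>x. sin (t * G k x) * sin (t * G l x)) = (\<lambda>x. (?A x - ?B x) / 2)"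
    by (simp add: sin_sin algebra_simps)
  then show "expectation (\<lambda>x. sin (t * G k x) * sin (t * G l x)) =
           exp (-(t^2)) * ((exp (t^2 * \<rho> k l) - exp (-(t^2 * \<rho> k l))) / 2)"
    using iA iB eA eB by (simp add: algebra_simps)
qed

lemma sq_cov:
  assumes kl: "1 \<le> k" "1 \<le> l"
  shows "integrable M (\<lambda>x. (G k x)^2 * (G l x)^2)"
    and "expectation (\<lambda>x. (G k x)^2 * (G l x)^2) = 1 + 2 * (\<rho> k l)^2"
proof -
  let ?A = "\<lambda>x. (1 * G k x + 1 * G l x) ^ 4"
  let ?B = "\<lambda>x. (1 * G k x + (-1) * G l x) ^ 4"
  have iA: "integrable M ?A" using lin_facts(6)[OF kl] .
  have iB: "integrable M ?B" using lin_facts(6)[OF kl] .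
  have eA: "expectation ?A = 3 * (2 + 2 * \<rho> k l)^2" using lin_facts(5)[OF kl, where a=1 and b=1] by simp
  have eB: "expectation ?B = 3 * (2 - 2 * \<rho> k l)^2" using lin_facts(5)[OF kl, where a=1 and b="-1"] by simp
  have e4: "expectation (\<lambda>x. G j x ^ 4) = 3" if "1 \<le> j" for j
    using gauss0_4[OF G_gauss[OF that]] m0 v1 that by simp
  have eq: "(\<lambda>x. (G k x)^2 * (G l x)^2) = (\<lambda>x. (?A x + ?B x - 2 * G k x ^ 4 - 2 * G l x ^ 4) / 12)"
    by (simp add: power2_eq_square power4_eq_xxxx algebra_simps)
  show "integrable M (\<lambda>x. (G k x)^2 * (G l x)^2)"
    unfolding eq using iA iB G_int[OF kl(1), of 4] G_int[OF kl(2), of 4] by auto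
  show "expectation (\<lambda>x. (G k x)^2 * (G l x)^2) = 1 + 2 * (\<rho> k l)^2"
    unfolding eq using iA iB G_int[OF kl(1), of 4] G_int[OF kl(2), of 4] eA eB e4 kl
    by (simp add: power2_eq_square algebra_simps)
qed

lemma cos_conv:
  assumes summ: "summable (\<lambda>n::nat. if n \<ge> 2 then
            1 / (real n * (ln (real n)) ^ 3) *
            (\<Sum>k=1..n. \<Sum>l=1..n. \<bar>\<rho> k l\<bar> / (real k * real l)) else 0)"
  shows "AE x in M. (\<lambda>n. (1 / ln (real n)) * (\<Sum>k=1..n. (cos (t * G k x) + 1) / real k))
            \<longlonglongrightarrow> 1 + exp (- (t^2) / 2)"
proof (rule core[OF P _ _ _ _ _ _ summ, where C = "t^2"])
  fix k :: nat assume k: "1 \<le> k"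
  show "(\<lambda>x. cos (t * G k x) + 1) \<in> borel_measurable M" using k by measurable
  show "integrable M (\<lambda>x. cos (t * G k x) + 1)" using cos_int[OF k] by auto
  show "expectation (\<lambda>x. cos (t * G k x) + 1) = 1 + exp (- (t^2) / 2)"
    using cos_int[OF k] cos_mean[OF k] by (simp add: prob_space.prob_space[OF P])
next
  fix k x show "0 \<le> cos (t * G k x) + 1" using cos_ge_minus_one[of "t * G k x"] by linarith
next
  fix k l :: nat assume kl: "1 \<le> k" "1 \<le> l"
  have eq: "(\<lambda>x. (cos (t * G k x) + 1) * (cos (t * G l x) + 1)) =
        (\<lambda>x. cos (t * G k x) * cos (t * G l x) + cos (t * G k x) + cos (t * G l x) + 1)"
    by (simp add: algebra_simps)
  have icc: "integrable M (\<lambda>x. cos (t * G k x) * cos (t * G l x))"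
    by (rule bounded_int[of _ 1]) (use kl in \<open>auto simp: abs_mult intro: mult_le_one\<close>)
  show "integrable M (\<lambda>x. (cos (t * G k x) + 1) * (cos (t * G l x) + 1))"
    unfolding eq using icc cos_int kl by auto
  have E: "expectation (\<lambda>x. (cos (t * G k x) + 1) * (cos (t * G l x) + 1)) =
        exp (-(t^2)) * ((exp (t^2 * \<rho> k l) + exp (-(t^2 * \<rho> k l))) / 2) + 2 * exp (- (t^2) / 2) + 1"
    unfolding eq using icc cos_int[OF kl(1)] cos_int[OF kl(2)] cos_mean[OF kl(1)] cos_mean[OF kl(2)] cc_cov(1)[OF kl]
    by (simp add: prob_space.prob_space[OF P])
  have "expectation (\<lambda>x. (cos (t * G k x) + 1) * (cos (t * G l x) + 1)) - (1 + exp (- (t^2) / 2))^2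
        = exp (-(t^2)) * ((exp (t^2 * \<rho> k l) + exp (-(t^2 * \<rho> k l))) / 2 - 1)"
    unfolding E using exp_split(3)[of t] by (simp add: power2_eq_square algebra_simps)
  also have "\<bar>\<dots>\<bar> \<le> t^2 * \<bar>\<rho> k l\<bar>"
    using cosh_bound(1)[of "t^2" "\<rho> k l"] rho_bound[OF kl] by (simp add: mult.assoc)
  finally show "\<bar>expectation (\<lambda>x. (cos (t * G k x) + 1) * (cos (t * G l x) + 1)) - (1 + exp (- (t^2) / 2))^2\<bar>
      \<le> t^2 * \<bar>\<rho> k l\<bar>" .
qed

lemma sin_conv:
  assumes summ: "summable (\<lambda>n::nat. if n \<ge> 2 then
            1 / (real n * (ln (real n)) ^ 3) *
            (\<Sum>k=1..n. \<Sum>l=1..n. \<bar>\<rho> k l\<bar> / (real k * real l)) else 0)"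
  shows "AE x in M. (\<lambda>n. (1 / ln (real n)) * (\<Sum>k=1..n. (sin (t * G k x) + 1) / real k))
            \<longlonglongrightarrow> 1"
proof (rule core[OF P _ _ _ _ _ _ summ, where C = "t^2"])
  fix k :: nat assume k: "1 \<le> k"
  show "(\<lambda>x. sin (t * G k x) + 1) \<in> borel_measurable M" using k by measurable
  show "integrable M (\<lambda>x. sin (t * G k x) + 1)" using sin_int[OF k] by auto
  show "expectation (\<lambda>x. sin (t * G k x) + 1) = 1"
    using sin_int[OF k] sin_mean[OF k] by (simp add: prob_space.prob_space[OF P])
next
  fix k x show "0 \<le> sin (t * G k x) + 1" using sin_ge_minus_one[of "t * G k x"] by linarith
next
  fix k l :: nat assume kl: "1 \<le> k" "1 \<le> l"
  have eq: "(\<lambda>x. (sin (t * G k x) + 1) * (sin (t * G l x) + 1)) =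
        (\<lambda>x. sin (t * G k x) * sin (t * G l x) + sin (t * G k x) + sin (t * G l x) + 1)"
    by (simp add: algebra_simps)
  have icc: "integrable M (\<lambda>x. sin (t * G k x) * sin (t * G l x))"
    by (rule bounded_int[of _ 1]) (use kl in \<open>auto simp: abs_mult intro: mult_le_one\<close>)
  show "integrable M (\<lambda>x. (sin (t * G k x) + 1) * (sin (t * G l x) + 1))"
    unfolding eq using icc sin_int kl by auto
  have E: "expectation (\<lambda>x. (sin (t * G k x) + 1) * (sin (t * G l x) + 1)) =
        exp (-(t^2)) * ((exp (t^2 * \<rho> k l) - exp (-(t^2 * \<rho> k l))) / 2) + 1"
    unfolding eq using icc sin_int[OF kl(1)] sin_int[OF kl(2)] sin_mean[OF kl(1)] sin_mean[OF kl(2)] cc_cov(2)[OF kl]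
    by (simp add: prob_space.prob_space[OF P])
  have "\<bar>expectation (\<lambda>x. (sin (t * G k x) + 1) * (sin (t * G l x) + 1)) - 1^2\<bar>
        = \<bar>exp (-(t^2)) * ((exp (t^2 * \<rho> k l) - exp (-(t^2 * \<rho> k l))) / 2)\<bar>"
    unfolding E by simp
  also have "\<dots> \<le> t^2 * \<bar>\<rho> k l\<bar>"
    using cosh_bound(2)[of "t^2" "\<rho> k l"] rho_bound[OF kl] by (simp add: mult.assoc)
  finally show "\<bar>expectation (\<lambda>x. (sin (t * G k x) + 1) * (sin (t * G l x) + 1)) - 1^2\<bar>
      \<le> t^2 * \<bar>\<rho> k l\<bar>" .
qed

lemma sq_conv:
  assumes summ: "summable (\<lambda>n::nat. if n \<ge> 2 then
            1 / (real n * (ln (real n)) ^ 3) *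
            (\<Sum>k=1..n. \<Sum>l=1..n. \<bar>\<rho> k l\<bar> / (real k * real l)) else 0)"
  shows "AE x in M. (\<lambda>n. (1 / ln (real n)) * (\<Sum>k=1..n. (G k x)^2 / real k)) \<longlonglongrightarrow> 1"
proof (rule core[OF P _ _ _ _ _ _ summ, where C = 2])
  fix k :: nat assume k: "1 \<le> k"
  show "(\<lambda>x. (G k x)^2) \<in> borel_measurable M" using k by measurable
  show "integrable M (\<lambda>x. (G k x)^2)" using G_int[OF k, of 2] .
  show "expectation (\<lambda>x. (G k x)^2) = 1" using v1 k by simp
next
  fix k x show "0 \<le> (G k x)^2" by simp
next
  fix k l :: nat assume kl: "1 \<le> k" "1 \<le> l"
  show "integrable M (\<lambda>x. (G k x)^2 * (G l x)^2)" using sq_cov(1)[OF kl] .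
  have r: "\<bar>\<rho> k l\<bar> \<le> 1" using rho_bound[OF kl] .
  have "(\<rho> k l)^2 = \<bar>\<rho> k l\<bar> * \<bar>\<rho> k l\<bar>" by (simp add: power2_eq_square abs_mult[symmetric])
  also have "\<dots> \<le> \<bar>\<rho> k l\<bar> * 1" using r by (intro mult_left_mono) auto
  finally have "(\<rho> k l)^2 \<le> \<bar>\<rho> k l\<bar>" by simp
  then show "\<bar>expectation (\<lambda>x. (G k x)^2 * (G l x)^2) - 1^2\<bar> \<le> 2 * \<bar>\<rho> k l\<bar>"
    using sq_cov(2)[OF kl] by simp
qed

end

lemma to_harm:
  assumes "(\<lambda>n. (1 / ln (real n)) * (\<Sum>k=1..n. f k / real k)) \<longlonglongrightarrow> L"
  shows "(\<lambda>n. (\<Sum>k=1..n. f k / real k) / harm n) \<longlonglongrightarrow> L"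
proof -
  have "(\<lambda>n. ((1 / ln (real n)) * (\<Sum>k=1..n. f k / real k)) / (harm n / ln (real n))) \<longlonglongrightarrow> L / 1"
    by (intro tendsto_divide assms harm_over_ln) simp
  moreover have "eventually (\<lambda>n. ((1 / ln (real n)) * (\<Sum>k=1..n. f k / real k)) / (harm n / ln (real n)) =
                   (\<Sum>k=1..n. f k / real k) / harm n) sequentially"
    using eventually_ge_at_top[of 2]
  proof eventually_elim
    case (elim n)
    have "(0::real) < harm n" by (rule harm_pos) (use elim in simp)
    then have "harm n \<noteq> (0::real)" by linarith
    moreover have "ln (real n) > 0" using elim by auto
    ultimately show ?case by (simp add: field_simps)
  qed
  ultimately show ?thesis using Lim_transform_eventually by fastforce
qed

lemma from_harm:
  assumes "(\<lambda>n. (\<Sum>k=1..n. f k / real k) / harm n) \<longlonglongrightarrow> L"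
  shows "(\<lambda>n. (1 / ln (real n)) * (\<Sum>k=1..n. f k / real k)) \<longlonglongrightarrow> L"
proof -
  have "(\<lambda>n. ((\<Sum>k=1..n. f k / real k) / harm n) * (harm n / ln (real n))) \<longlonglongrightarrow> L * 1"
    by (intro tendsto_mult assms harm_over_ln)
  moreover have "eventually (\<lambda>n. ((\<Sum>k=1..n. f k / real k) / harm n) * (harm n / ln (real n)) =
                   (1 / ln (real n)) * (\<Sum>k=1..n. f k / real k)) sequentially"
    using eventually_ge_at_top[of 2]
  proof eventually_elim
    case (elim n)
    have "(0::real) < harm n" by (rule harm_pos) (use elim in simp)
    then have "harm n \<noteq> (0::real)" by linarith
    moreover have "ln (real n) > 0" using elim by auto
    ultimately show ?case by (simp add: field_simps)
  qed
  ultimately show ?thesis using Lim_transform_eventually by fastforce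
qed

lemma harm_sum_add1:
  assumes "n \<ge> 1"
  shows "(\<Sum>k=1..n. (f k + 1) / real k) / harm n = (\<Sum>k=1..n. f k / real k) / harm n + 1"
proof -
  have "(\<Sum>k=1..n. (f k + 1) / real k) = (\<Sum>k=1..n. f k / real k) + harm n"
    unfolding harm_def by (simp add: distrib_right sum.distrib divide_inverse)
  moreover have "(0::real) < harm n" by (rule harm_pos) (use assms in simp)
  then have "harm n \<noteq> (0::real)" by linarith
  ultimately show ?thesis by (simp add: add_divide_distrib)
qed

lemma harm_shift:
  assumes "(\<lambda>n. (\<Sum>k=1..n. (f k + 1) / real k) / harm n) \<longlonglongrightarrow> L + 1"
  shows "(\<lambda>n. (\<Sum>k=1..n. f k / real k) / harm n) \<longlonglongrightarrow> L"
proof -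
  have "(\<lambda>n. (\<Sum>k=1..n. (f k + 1) / real k) / harm n - 1) \<longlonglongrightarrow> L + 1 - 1"
    by (intro tendsto_diff assms tendsto_const)
  moreover have "eventually (\<lambda>n. (\<Sum>k=1..n. (f k + 1) / real k) / harm n - 1 =
        (\<Sum>k=1..n. f k / real k) / harm n) sequentially"
    using eventually_ge_at_top[of 1] by eventually_elim (use harm_sum_add1[of _ f] in simp)
  ultimately show ?thesis using Lim_transform_eventually by fastforce
qed

lemma iexp_lip: "cmod (iexp a - iexp b) \<le> \<bar>a - b\<bar>"
proof -
  have "cmod (iexp (a - b) - 1) \<le> \<bar>a - b\<bar>"
    using iexp_approx1[of "a - b" 0] by simp
  moreover have "iexp a - iexp b = iexp b * (iexp (a - b) - 1)"
    by (simp add: algebra_simps exp_add[symmetric])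
  moreover have "cmod (iexp b) = 1" by simp
  ultimately show ?thesis by (simp add: norm_mult)
qed

lemma abs_le_1_sq: "\<bar>x\<bar> \<le> 1 + x^2" for x :: real
proof (cases "\<bar>x\<bar> \<le> 1")
  case True then show ?thesis by (simp add: add_increasing2)
next
  case False
  then have "\<bar>x\<bar> * 1 \<le> \<bar>x\<bar> * \<bar>x\<bar>" by (intro mult_left_mono) auto
  then show ?thesis by (simp add: power2_eq_square abs_mult[symmetric])
qed

lemma int_distr_pmf:
  fixes h :: "real \<Rightarrow> 'b::{banach, second_countable_topology}" and g :: "nat \<Rightarrow> real"
  assumes h: "h \<in> borel_measurable borel" and A: "finite A" and z: "\<And>k. k \<notin> A \<Longrightarrow> pmf P k = 0"
  shows "integral\<^sup>L (distr (measure_pmf P) borel g) h = (\<Sum>k\<in>A. pmf P k *\<^sub>R h (g k))"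
proof -
  have "integral\<^sup>L (distr (measure_pmf P) borel g) h = integral\<^sup>L (measure_pmf P) (\<lambda>k. h (g k))"
    by (rule integral_distr) (use h in simp_all)
  also have "\<dots> = (\<Sum>k\<in>A. pmf P k *\<^sub>R h (g k))"
    by (rule integral_measure_pmf[OF A]) (use z in \<open>auto simp: set_pmf_iff\<close>)
  finally show ?thesis .
qed

lemma final_det:
  fixes g :: "nat \<Rightarrow> real" and \<phi> :: "real \<Rightarrow> real"
  assumes hc: "\<And>t. t \<in> \<rat> \<Longrightarrow> (\<lambda>n. (1 / ln (real n)) * (\<Sum>k=1..n. (cos (t * g k) + 1) / real k))
                  \<longlonglongrightarrow> 1 + exp (- (t^2) / 2)"
    and hs: "\<And>t. t \<in> \<rat> \<Longrightarrow> (\<lambda>n. (1 / ln (real n)) * (\<Sum>k=1..n. (sin (t * g k) + 1) / real k))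
                  \<longlonglongrightarrow> 1"
    and hq: "(\<lambda>n. (1 / ln (real n)) * (\<Sum>k=1..n. (g k)^2 / real k)) \<longlonglongrightarrow> 1"
    and \<phi>c: "continuous_on UNIV \<phi>" and \<phi>b: "bounded (range \<phi>)"
  shows "(\<lambda>n. (1 / ln (real n)) * (\<Sum>k=1..n. \<phi> (g k) / real k)) \<longlonglongrightarrow> integral\<^sup>L std_normal_distribution \<phi>"
proof -
  define w where "w n k = 1 / (real k * harm n)" for n k :: nat
  have wnn: "0 \<le> w n k" for n k unfolding w_def by (simp add: harm_nonneg)
  have wsum: "(\<Sum>k=1..n. w n k * h k) = (\<Sum>k=1..n. h k / real k) / harm n" for n h
    unfolding w_def sum_divide_distrib by (intro sum.cong refl) (simp add: field_simps)
  have C1: "(\<lambda>n. (\<Sum>k=1..n. cos (t * g k) / real k) / harm n) \<longlonglongrightarrow> exp (- (t^2) / 2)"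
    if "t \<in> \<rat>" for t
    by (rule harm_shift, rule to_harm) (use hc[OF that] in \<open>simp add: add.commute\<close>)
  have S1: "(\<lambda>n. (\<Sum>k=1..n. sin (t * g k) / real k) / harm n) \<longlonglongrightarrow> 0"
    if "t \<in> \<rat>" for t
    by (rule harm_shift, rule to_harm) (use hs[OF that] in simp)
  have Q1: "(\<lambda>n. (\<Sum>k=1..n. ((g k)^2 + 1) / real k) / harm n) \<longlonglongrightarrow> 2"
  proof -
    have "(\<lambda>n. (\<Sum>k=1..n. (g k)^2 / real k) / harm n + 1) \<longlonglongrightarrow> 1 + 1"
      by (intro tendsto_add to_harm hq tendsto_const)
    moreover have "eventually (\<lambda>n. (\<Sum>k=1..n. (g k)^2 / real k) / harm n + 1 =
          (\<Sum>k=1..n. ((g k)^2 + 1) / real k) / harm n) sequentially"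
      using eventually_ge_at_top[of 1] by eventually_elim (use harm_sum_add1[of _ "\<lambda>k. (g k)^2"] in simp)
    ultimately show ?thesis using Lim_transform_eventually by fastforce
  qed
  define B where "B n = (\<Sum>k=1..n. w n k * (1 + (g k)^2))" for n
  have Blim: "B \<longlonglongrightarrow> 2" unfolding B_def wsum using Q1 by (simp add: add.commute)
  have Bnn: "0 \<le> B n" for n unfolding B_def using wnn by (intro sum_nonneg) auto
  define c where "c n t = (\<Sum>k=1..n. complex_of_real (w n k) * iexp (t * g k))" for n t
  have ie: "iexp x = cis x" for x by (simp add: cis_conv_exp)
  have Rec: "Re (c n t) = (\<Sum>k=1..n. cos (t * g k) / real k) / harm n" for n t
    unfolding c_def Re_sum ie wsum[symmetric] by simp
  have Imc: "Im (c n t) = (\<Sum>k=1..n. sin (t * g k) / real k) / harm n" for n t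
    unfolding c_def Im_sum ie wsum[symmetric] by simp
  define f where "f t = complex_of_real (exp (- (t^2) / 2))" for t
  have CR: "(\<lambda>n. c n t) \<longlonglongrightarrow> f t" if "t \<in> \<rat>" for t
    unfolding tendsto_complex_iff Rec Imc f_def using C1[OF that] S1[OF that] by simp
  have Lip: "cmod (c n t - c n s) \<le> \<bar>t - s\<bar> * B n" for n t s
  proof -
    have "c n t - c n s = (\<Sum>k=1..n. complex_of_real (w n k) * (iexp (t * g k) - iexp (s * g k)))"
      unfolding c_def by (simp add: sum_subtractf right_diff_distrib)
    also have "cmod \<dots> \<le> (\<Sum>k=1..n. cmod (complex_of_real (w n k) * (iexp (t * g k) - iexp (s * g k))))"
      by (rule norm_sum)
    also have "\<dots> \<le> (\<Sum>k=1..n. \<bar>t - s\<bar> * (w n k * (1 + (g k)^2)))"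
    proof (intro sum_mono)
      fix k
      have "cmod (iexp (t * g k) - iexp (s * g k)) \<le> \<bar>t * g k - s * g k\<bar>" by (rule iexp_lip)
      also have "\<dots> = \<bar>t - s\<bar> * \<bar>g k\<bar>" by (simp add: left_diff_distrib[symmetric] abs_mult)
      also have "\<dots> \<le> \<bar>t - s\<bar> * (1 + (g k)^2)" by (intro mult_left_mono abs_le_1_sq) auto
      finally have "w n k * cmod (iexp (t * g k) - iexp (s * g k)) \<le> w n k * (\<bar>t - s\<bar> * (1 + (g k)^2))"
        using wnn by (intro mult_left_mono) auto
      then show "cmod (complex_of_real (w n k) * (iexp (t * g k) - iexp (s * g k))) \<le> \<bar>t - s\<bar> * (w n k * (1 + (g k)^2))"
        using wnn[of n k] by (simp add: norm_mult abs_of_nonneg mult_ac)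
    qed
    also have "\<dots> = \<bar>t - s\<bar> * B n" unfolding B_def by (simp add: sum_distrib_left)
    finally show ?thesis .
  qed
  have CA: "(\<lambda>n. c n t) \<longlonglongrightarrow> f t" for t
  proof (rule LIMSEQ_I)
    fix r :: real assume r: "0 < r"
    have "isCont f t" unfolding f_def by (intro continuous_intros) auto
    then obtain d where d: "d > 0" "\<And>x. x \<noteq> t \<and> norm (x - t) < d \<Longrightarrow> norm (f x - f t) < r / 3"
      unfolding isCont_def using LIM_D[of f "f t" t "r / 3"] r by auto
    define \<delta> where "\<delta> = min d (r / 12)"
    have \<delta>: "\<delta> > 0" "\<delta> \<le> d" "\<delta> \<le> r / 12" using d r unfolding \<delta>_def by auto
    obtain s where s: "s \<in> \<rat>" "t < s" "s < t + \<delta>" using Rats_dense_in_real[of t "t + \<delta>"] \<delta> by auto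
    have fs: "norm (f s - f t) < r / 3" using d(2)[of s] s \<delta> by auto
    obtain N1 where N1: "\<And>n. n \<ge> N1 \<Longrightarrow> B n < 3"
      using order_tendstoD(2)[OF Blim, of 3] unfolding eventually_sequentially by auto
    obtain N2 where N2: "\<And>n. n \<ge> N2 \<Longrightarrow> norm (c n s - f s) < r / 3"
      using LIMSEQ_D[OF CR[OF s(1)], of "r / 3"] r by auto
    show "\<exists>no. \<forall>n\<ge>no. norm (c n t - f t) < r"
    proof (intro exI allI impI)
      fix n assume n: "max N1 N2 \<le> n"
      have "\<bar>t - s\<bar> * B n \<le> \<delta> * 3"
        using s Bnn[of n] N1[of n] n \<delta> by (intro mult_mono) auto
      then have "cmod (c n t - c n s) \<le> r / 4" using Lip[of n t s] \<delta> by linarith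
      moreover have "norm (c n s - f s) < r / 3" using N2 n by auto
      moreover have "norm (c n t - f t) \<le> norm (c n t - c n s) + norm (c n s - f s) + norm (f s - f t)"
      proof -
        have e: "c n t - f t = ((c n t - c n s) + (c n s - f s)) + (f s - f t)" by simp
        have "norm (((c n t - c n s) + (c n s - f s)) + (f s - f t)) \<le> norm ((c n t - c n s) + (c n s - f s)) + norm (f s - f t)"
          by (rule norm_triangle_ineq)
        moreover have "norm ((c n t - c n s) + (c n s - f s)) \<le> norm (c n t - c n s) + norm (c n s - f s)"
          by (rule norm_triangle_ineq)
        ultimately show ?thesis unfolding e by linarith
      qed
      ultimately show "norm (c n t - f t) < r" using fs r by linarith
    qed
  qed
  define p where "p n = embed_pmf (\<lambda>k. if k \<in> {1..n} then w n k else 0)" for n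
  have hs1: "(\<Sum>k=1..n. 1 / real k) = (harm n :: real)" for n
    unfolding harm_def by (simp add: divide_inverse)
  have wtot: "(\<Sum>k=1..n. w n k) = 1" if "n \<ge> 1" for n
  proof -
    have "(0::real) < harm n" by (rule harm_pos) (use that in simp)
    then have "harm n \<noteq> (0::real)" by linarith
    then show ?thesis using wsum[of n "\<lambda>_. 1"] hs1[of n] by simp
  qed
  have pmf_p: "pmf (p n) k = (if k \<in> {1..n} then w n k else 0)" if "n \<ge> 1" for n k
  proof -
    have nn: "\<And>x. 0 \<le> (if x \<in> {1..n} then w n x else 0)" using wnn by simp
    have "(\<integral>\<^sup>+x. ennreal (if x \<in> {1..n} then w n x else 0) \<partial>count_space UNIV) =
          (\<Sum>x\<in>{1..n}. ennreal (if x \<in> {1..n} then w n x else 0))"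
      by (rule nn_integral_count_space') auto
    also have "\<dots> = ennreal (\<Sum>x\<in>{1..n}. (if x \<in> {1..n} then w n x else 0))"
      using wnn by (intro sum_ennreal) auto
    also have "(\<Sum>x\<in>{1..n}. (if x \<in> {1..n} then w n x else 0)) = (\<Sum>x=1..n. w n x)"
      by (intro sum.cong) auto
    finally have "(\<integral>\<^sup>+x. ennreal (if x \<in> {1..n} then w n x else 0) \<partial>count_space UNIV) = 1"
      using wtot[OF that] by simp
    then show ?thesis unfolding p_def
      by (rule pmf_embed_pmf[where f="\<lambda>k. if k \<in> {1..n} then w n k else 0", OF nn])
  qed
  define \<mu> where "\<mu> n = distr (measure_pmf (p (Suc n))) borel g" for n
  have rd: "real_distribution (\<mu> n)" for n
    unfolding \<mu>_def by (rule prob_space.real_distribution_distr[OF prob_space_measure_pmf]) simp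
  have z: "pmf (p (Suc n)) k = 0" if "k \<notin> {1..Suc n}" for n k
    using pmf_p[of "Suc n" k] that by auto
  have charmu: "char (\<mu> n) t = c (Suc n) t" for n t
  proof -
    have "char (\<mu> n) t = (\<Sum>k\<in>{1..Suc n}. pmf (p (Suc n)) k *\<^sub>R iexp (t * g k))"
      unfolding char_def \<mu>_def by (rule int_distr_pmf) (use z in auto)
    also have "\<dots> = c (Suc n) t"
      unfolding c_def by (intro sum.cong refl) (simp add: pmf_p scaleR_conv_of_real)
    finally show ?thesis .
  qed
  have wc: "weak_conv_m \<mu> std_normal_distribution"
  proof (rule levy_continuity[OF rd real_dist_normal_dist])
    fix t
    show "(\<lambda>n. char (\<mu> n) t) \<longlonglongrightarrow> char std_normal_distribution t"
      unfolding charmu char_std_normal_distribution using LIMSEQ_Suc[OF CA[of t]] by (simp add: f_def)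
  qed
  obtain B\<phi> where B\<phi>: "\<And>x. norm (\<phi> x) \<le> B\<phi>" using \<phi>b unfolding bounded_iff by auto
  have ic: "isCont \<phi> x" for x using \<phi>c continuous_on_eq_continuous_at[of UNIV \<phi>] by auto
  have "(\<lambda>n. integral\<^sup>L (\<mu> n) \<phi>) \<longlonglongrightarrow> integral\<^sup>L std_normal_distribution \<phi>"
    by (rule weak_conv_imp_integral_bdd_continuous_conv[OF rd real_dist_normal_dist wc ic B\<phi>])
  moreover have "integral\<^sup>L (\<mu> n) \<phi> = (\<Sum>k=1..Suc n. \<phi> (g k) / real k) / harm (Suc n)" for n
  proof -
    have m: "\<phi> \<in> borel_measurable borel" using \<phi>c by (rule borel_measurable_continuous_onI)
    have "integral\<^sup>L (\<mu> n) \<phi> = (\<Sum>k\<in>{1..Suc n}. pmf (p (Suc n)) k *\<^sub>R \<phi> (g k))"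
      unfolding \<mu>_def by (rule int_distr_pmf) (use z m in auto)
    also have "\<dots> = (\<Sum>k=1..Suc n. w (Suc n) k * \<phi> (g k))"
      by (intro sum.cong refl) (simp add: pmf_p)
    finally show ?thesis unfolding wsum .
  qed
  ultimately have "(\<lambda>n. (\<lambda>m. (\<Sum>k=1..m. \<phi> (g k) / real k) / harm m) (Suc n)) \<longlonglongrightarrow> integral\<^sup>L std_normal_distribution \<phi>"
    by simp
  then have "(\<lambda>m. (\<Sum>k=1..m. \<phi> (g k) / real k) / harm m) \<longlonglongrightarrow> integral\<^sup>L std_normal_distribution \<phi>"
    by (rule filterlim_sequentially_Suc[THEN iffD1])
  then show ?thesis by (rule from_harm)
qed

theorem mainTheorem5:
  fixes M :: "'a measure" and G :: "nat \<Rightarrow> 'a \<Rightarrow> real"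
  assumes "prob_space M"
    and "jointly_gaussian M G"
    and "\<forall>n\<ge>1. integral\<^sup>L M (G n) = 0"
    and "\<forall>n\<ge>1. integral\<^sup>L M (\<lambda>x. (G n x)\<^sup>2) = 1"
    and "summable (\<lambda>n::nat. if n \<ge> 2 then
            1 / (real n * (ln (real n)) ^ 3) *
            (\<Sum>k=1..n. \<Sum>l=1..n. \<bar>integral\<^sup>L M (\<lambda>x. G k x * G l x)\<bar> / (real k * real l))
          else 0)"
  shows "AE \<omega> in M. \<forall>\<phi> :: real \<Rightarrow> real. continuous_on UNIV \<phi> \<and> bounded (range \<phi>) \<longrightarrow>
           ((\<lambda>n. (1 / ln (real n)) * (\<Sum>k=1..n. \<phi> (G k \<omega>) / real k))
              \<longlonglongrightarrow> integral\<^sup>L std_normal_distribution \<phi>)"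
proof -
  interpret gseq M G by (rule gseq.intro) (use assms in auto)
  have summ: "summable (\<lambda>n::nat. if n \<ge> 2 then
            1 / (real n * (ln (real n)) ^ 3) *
            (\<Sum>k=1..n. \<Sum>l=1..n. \<bar>\<rho> k l\<bar> / (real k * real l)) else 0)"
    using assms(5) unfolding \<rho>_def .
  have AEc: "AE x in M. \<forall>t\<in>\<rat>. (\<lambda>n. (1 / ln (real n)) * (\<Sum>k=1..n. (cos (t * G k x) + 1) / real k))
            \<longlonglongrightarrow> 1 + exp (- (t^2) / 2)"
    by (rule AE_ball_countable[THEN iffD2, OF countable_rat]) (use cos_conv[OF summ] in blast)
  have AEs: "AE x in M. \<forall>t\<in>\<rat>. (\<lambda>n. (1 / ln (real n)) * (\<Sum>k=1..n. (sin (t * G k x) + 1) / real k))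
            \<longlonglongrightarrow> 1"
    by (rule AE_ball_countable[THEN iffD2, OF countable_rat]) (use sin_conv[OF summ] in blast)
  have AEq: "AE x in M. (\<lambda>n. (1 / ln (real n)) * (\<Sum>k=1..n. (G k x)^2 / real k)) \<longlonglongrightarrow> 1"
    by (rule sq_conv[OF summ])
  show ?thesis
    using AEc AEs AEq
  proof eventually_elim
    case (elim x)
    show ?case
    proof (intro allI impI)
      fix \<phi> :: "real \<Rightarrow> real"
      assume "continuous_on UNIV \<phi> \<and> bounded (range \<phi>)"
      then show "(\<lambda>n. (1 / ln (real n)) * (\<Sum>k=1..n. \<phi> (G k x) / real k))
              \<longlonglongrightarrow> integral\<^sup>L std_normal_distribution \<phi>"
        using elim by (intro final_det[where g="\<lambda>k. G k x"]) auto
    qed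
  qed
qed

end
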